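(* Let $H$ be either $\mathrm{Sym}(m)$ acting on the set $\Delta$ of $k$-element subsets of $\{1,\ldots,m\}$, where $m\ge 5$ and $1\le k<m/2$, or $\mathrm{P\Gamma L}_d(q)$ acting on the set $\Delta$ of points of the projective space $\mathrm{PG}_{d-1}(q)$, where $d\ge 2$ and $q\ge 4$ is a prime power; let $r=|\Delta|$. Let $\ell\geq 2$ and let $H^\ell$ act coordinatewise on $\Omega=\Delta^\ell$. Suppose $g=(h_1,\ldots,h_\ell)\in H^\ell$ has at most four cycles on $\Omega$. Then, after relabelling the index set $\{1,\ldots,\ell\}$ if necessary, one of the following holds: (i) $\ell=2$, and $h_1$, $h_2$ each have exactly two cycles on $\Delta$, of lengths $t_1,r-t_1$ and $t_2,r-t_2$ respectively, and each of $t_1,r-t_1$ is relatively prime to each of $t_2,r-t_2$; (ii) $\ell=2$, $h_1$ is a single cycle of length $r$ on $\Delta$, $h_2$ has exactly two cycles on $\Delta$, of lengths $t_2,r-t_2$, and $\gcd(r,t_2)\leq 2$; (iii) $\ell=2$, $h_1$ is a single cycle of length $r$ on $\Delta$, $h_2$ has exactly three cycles on $\Delta$, of lengths $t_2,t_2',r-(t_2+t_2')$, and $\gcd(r,t_2)+\gcd(r,t_2')+\gcd(r,t_2+t_2')\leq 4$; (iv) $\ell=3$, $h_1$ is a single cycle of length $r$ on $\Delta$, $h_2$ has exactly two cycles on $\Delta$, of lengths $t_2,r-t_2$, $h_3$ has exactly two cycles on $\Delta$, of lengths $t_3,r-t_3$, and the integers $r,t_2,r-t_2,t_3,r-t_3$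 are pairwise relatively prime; (v) $\ell=2$, $h_1$ is a single cycle of length $r$ on $\Delta$, $h_2$ has exactly four cycles on $\Delta$, of lengths $t_2,t_2',t_2'',r-(t_2+t_2'+t_2'')$, and $\gcd(r,t_2)=\gcd(r,t_2')=\gcd(r,t_2'')=\gcd(r,t_2+t_2'+t_2'')=1$.
   Context: The number of cycles of a permutation is the number of orbits of the cyclic group it generates, fixed points included. The element $(h_1,\ldots,h_\ell)$ acts on $\Omega=\Delta^\ell$ by $(\delta_1,\ldots,\delta_\ell)\mapsto(\delta_1^{h_1},\ldots,\delta_\ell^{h_\ell})$. *)

theory Defs
  imports "HOL-Analysis.Finite_Cartesian_Product" "HOL-Library.FuncSet"
    "HOL-Library.Multiset" "HOL-Combinatorics.Permutations"
begin

definition orbit_of :: "('b \<Rightarrow> 'b) \<Rightarrow> 'b \<Rightarrow> 'b set" where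
  "orbit_of h x = {(h ^^ n) x | n. True}"

text \<open>Number of cycles (orbits of the generated cyclic group, fixed points included)
  of h on the set A.\<close>
definition ncycles :: "('b \<Rightarrow> 'b) \<Rightarrow> 'b set \<Rightarrow> nat" where
  "ncycles h A = card (orbit_of h ` A)"

definition cycle_type :: "('b \<Rightarrow> 'b) \<Rightarrow> 'b set \<Rightarrow> nat multiset" where
  "cycle_type h A = image_mset card (mset_set (orbit_of h ` A))"

definition prod_perm :: "nat \<Rightarrow> (nat \<Rightarrow> 'b \<Rightarrow> 'b) \<Rightarrow> (nat \<Rightarrow> 'b) \<Rightarrow> (nat \<Rightarrow> 'b)" where
  "prod_perm l h x = (\<lambda>i. if i < l then h i (x i) else undefined)"

definition prod_set :: "nat \<Rightarrow> 'b set \<Rightarrow> (nat \<Rightarrow> 'b) set" where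
  "prod_set l \<Delta> = PiE {..<l} (\<lambda>_. \<Delta>)"

definition ksubsets :: "nat \<Rightarrow> nat \<Rightarrow> nat set set" where
  "ksubsets m k = {S. S \<subseteq> {1..m} \<and> card S = k}"

definition SymH :: "nat \<Rightarrow> (nat set \<Rightarrow> nat set) set" where
  "SymH m = {(\<lambda>S. \<sigma> ` S) | \<sigma>. \<sigma> permutes {1..m}}"

definition pg_points :: "('a::field ^ 'n) set set" where
  "pg_points = {{c *s v | c. True} | v. v \<noteq> 0}"

definition field_aut :: "('a::field \<Rightarrow> 'a) \<Rightarrow> bool" where
  "field_aut \<sigma> \<longleftrightarrow> bij \<sigma> \<and> (\<forall>a b. \<sigma> (a + b) = \<sigma> a + \<sigma> b) \<and> (\<forall>a b. \<sigma> (a * b) = \<sigma> a * \<sigma> b)"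

definition semilinear_bij :: "('a::field ^ 'n \<Rightarrow> 'a ^ 'n) \<Rightarrow> bool" where
  "semilinear_bij f \<longleftrightarrow> bij f \<and> (\<forall>x y. f (x + y) = f x + f y) \<and>
     (\<exists>\<sigma>. field_aut \<sigma> \<and> (\<forall>c x. f (c *s x) = \<sigma> c *s f x))"

definition PGammaL :: "(('a::field ^ 'n) set \<Rightarrow> ('a ^ 'n) set) set" where
  "PGammaL = {(\<lambda>P. f ` P) | f. semilinear_bij f}"

definition prop53_concl :: "nat \<Rightarrow> 'b set \<Rightarrow> (nat \<Rightarrow> 'b \<Rightarrow> 'b) \<Rightarrow> bool" where
  "prop53_concl l \<Delta> h \<longleftrightarrow> (\<exists>\<pi>. \<pi> permutes {..<l} \<and>
    (let r = card \<Delta>; c = (\<lambda>i. cycle_type (h (\<pi> i)) \<Delta>) in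
     (l = 2 \<and> (\<exists>t1 t2. c 0 = {#t1, r - t1#} \<and> c 1 = {#t2, r - t2#} \<and>
        coprime t1 t2 \<and> coprime t1 (r - t2) \<and> coprime (r - t1) t2 \<and> coprime (r - t1) (r - t2)))
   \<or> (l = 2 \<and> c 0 = {#r#} \<and> (\<exists>t2. c 1 = {#t2, r - t2#} \<and> gcd r t2 \<le> 2))
   \<or> (l = 2 \<and> c 0 = {#r#} \<and> (\<exists>t t'. c 1 = {#t, t', r - (t + t')#} \<and>
        gcd r t + gcd r t' + gcd r (t + t') \<le> 4))
   \<or> (l = 3 \<and> c 0 = {#r#} \<and> (\<exists>t2 t3. c 1 = {#t2, r - t2#} \<and> c 2 = {#t3, r - t3#} \<and>
        coprime r t2 \<and> coprime r (r - t2) \<and> coprime r t3 \<and> coprime r (r - t3) \<and>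
        coprime t2 (r - t2) \<and> coprime t2 t3 \<and> coprime t2 (r - t3) \<and>
        coprime (r - t2) t3 \<and> coprime (r - t2) (r - t3) \<and> coprime t3 (r - t3)))
   \<or> (l = 2 \<and> c 0 = {#r#} \<and> (\<exists>t t' t''. c 1 = {#t, t', t'', r - (t + t' + t'')#} \<and>
        gcd r t = 1 \<and> gcd r t' = 1 \<and> gcd r t'' = 1 \<and> gcd r (t + t' + t'') = 1))))"

end

theory Submission
  imports Defs "HOL-Library.Cardinality"
begin


definition pon :: "('b \<Rightarrow> 'b) \<Rightarrow> 'b set \<Rightarrow> bool" where
  "pon h D \<longleftrightarrow> finite D \<and> h ` D \<subseteq> D \<and> inj_on h D"

lemma pon_funpow_in: "pon h D \<Longrightarrow> x \<in> D \<Longrightarrow> (h ^^ n) x \<in> D"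
  by (induction n) (auto simp: pon_def)

lemma pon_orbit_sub: "pon h D \<Longrightarrow> x \<in> D \<Longrightarrow> orbit_of h x \<subseteq> D"
  by (auto simp: orbit_of_def pon_funpow_in)

lemma self_in_orbit: "x \<in> orbit_of h x"
  unfolding orbit_of_def by (auto intro: exI[of _ 0])

lemma funpow_in_orbit_of: "(h ^^ n) x \<in> orbit_of h x"
  unfolding orbit_of_def by auto

lemma pon_inj_funpow: "pon h D \<Longrightarrow> inj_on (h ^^ n) D"
proof (induction n)
  case 0 then show ?case by simp
next
  case (Suc n)
  have "inj_on (h \<circ> (h ^^ n)) D"
  proof (rule comp_inj_on)
    show "inj_on (h ^^ n) D" using Suc by simp
    have "(h ^^ n) ` D \<subseteq> D" using pon_funpow_in[OF Suc.prems] by auto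
    moreover have "inj_on h D" using Suc.prems unfolding pon_def by simp
    ultimately show "inj_on h ((h ^^ n) ` D)" using inj_on_subset by blast
  qed
  then show ?case by (simp add: comp_def)
qed

lemma pon_period_ex:
  assumes "pon h D" "x \<in> D"
  shows "\<exists>p>0. (h ^^ p) x = x"
proof -
  let ?f = "\<lambda>n. (h ^^ n) x"
  have fin: "finite D" using assms unfolding pon_def by simp
  have "?f ` {..card D} \<subseteq> D" using pon_funpow_in[OF assms] by auto
  then have "card (?f ` {..card D}) \<le> card D" using fin card_mono by blast
  then have "\<not> inj_on ?f {..card D}"
  proof (intro notI)
    assume "card (?f ` {..card D}) \<le> card D" "inj_on ?f {..card D}"
    then have "card {..card D} \<le> card D" by (simp add: card_image)
    then show False by simp
  qed
  then obtain i j where ij: "i \<le> card D" "j \<le> card D" "i \<noteq> j" "?f i = ?f j"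
    unfolding inj_on_def by auto
  have key: "\<And>i j. i < j \<Longrightarrow> ?f i = ?f j \<Longrightarrow> \<exists>p>0. (h ^^ p) x = x"
  proof -
    fix i j :: nat assume a: "i < j" "?f i = ?f j"
    have "(h ^^ i) ((h ^^ (j - i)) x) = (h ^^ j) x"
      using a proof -
        have "j = i + (j - i)" using a by simp
        then have "(h ^^ j) x = (h ^^ (i + (j - i))) x" by simp
        then show ?thesis by (simp only: funpow_add o_apply)
      qed
    then have "(h ^^ i) ((h ^^ (j - i)) x) = (h ^^ i) x" using a by simp
    moreover have "(h ^^ (j - i)) x \<in> D" by (rule pon_funpow_in[OF assms])
    ultimately have "(h ^^ (j - i)) x = x"
      using pon_inj_funpow[OF assms(1), of i] assms(2) unfolding inj_on_def by blast
    then show "\<exists>p>0. (h ^^ p) x = x" using a by (intro exI[of _ "j - i"]) auto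
  qed
  show ?thesis
  proof (cases "i < j")
    case True then show ?thesis using key ij by blast
  next
    case False then have "j < i" using ij by simp
    then show ?thesis using key ij by metis
  qed
qed

definition per :: "('b \<Rightarrow> 'b) \<Rightarrow> 'b \<Rightarrow> nat" where
  "per h x = (LEAST p. 0 < p \<and> (h ^^ p) x = x)"

lemma per_props:
  assumes "pon h D" "x \<in> D"
  shows "0 < per h x" "(h ^^ per h x) x = x"
proof -
  obtain p where "0 < p \<and> (h ^^ p) x = x" using pon_period_ex[OF assms] by blast
  then have "0 < per h x \<and> (h ^^ per h x) x = x"
    unfolding per_def by (rule LeastI)
  then show "0 < per h x" "(h ^^ per h x) x = x" by auto
qed

lemma per_least:
  "0 < q \<Longrightarrow> q < per h x \<Longrightarrow> (h ^^ q) x \<noteq> x"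
  unfolding per_def using not_less_Least by blast

lemma funpow_mult_fix: "(h ^^ p) x = x \<Longrightarrow> (h ^^ (p * q)) x = x"
proof (induction q)
  case 0 then show ?case by simp
next
  case (Suc q)
  have "(h ^^ (p * Suc q)) x = (h ^^ p) ((h ^^ (p * q)) x)"
    by (simp add: funpow_add)
  then show ?case using Suc by simp
qed

lemma funpow_mod_per:
  assumes "pon h D" "x \<in> D"
  shows "(h ^^ n) x = (h ^^ (n mod per h x)) x"
proof -
  let ?p = "per h x"
  have "(h ^^ n) x = (h ^^ (n mod ?p + ?p * (n div ?p))) x" by simp
  also have "\<dots> = (h ^^ (n mod ?p)) ((h ^^ (?p * (n div ?p))) x)"
    by (simp only: funpow_add o_apply)
  also have "(h ^^ (?p * (n div ?p))) x = x"
    by (rule funpow_mult_fix[OF per_props(2)[OF assms]])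
  finally show ?thesis .
qed

lemma fix_iff_per_dvd:
  assumes "pon h D" "x \<in> D"
  shows "(h ^^ n) x = x \<longleftrightarrow> per h x dvd n"
proof
  assume a: "(h ^^ n) x = x"
  have "(h ^^ (n mod per h x)) x = x" using a funpow_mod_per[OF assms, of n] by simp
  moreover have "n mod per h x < per h x" using per_props[OF assms] by simp
  ultimately have "n mod per h x = 0" using per_least[of "n mod per h x" h x] by auto
  then show "per h x dvd n" by auto
next
  assume "per h x dvd n"
  then obtain q where "n = per h x * q" by auto
  then show "(h ^^ n) x = x" using funpow_mult_fix[OF per_props(2)[OF assms]] by simp
qed

lemma orbit_of_per:
  assumes "pon h D" "x \<in> D"
  shows "orbit_of h x = (\<lambda>n. (h ^^ n) x) ` {..<per h x}"
proof -
  have "orbit_of h x \<subseteq> (\<lambda>n. (h ^^ n) x) ` {..<per h x}"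
  proof
    fix y assume "y \<in> orbit_of h x"
    then obtain n where "y = (h ^^ n) x" unfolding orbit_of_def by auto
    then have "y = (h ^^ (n mod per h x)) x" using funpow_mod_per[OF assms] by simp
    moreover have "n mod per h x < per h x" using per_props[OF assms] by simp
    ultimately show "y \<in> (\<lambda>n. (h ^^ n) x) ` {..<per h x}" by auto
  qed
  moreover have "(\<lambda>n. (h ^^ n) x) ` {..<per h x} \<subseteq> orbit_of h x"
    by (auto intro: funpow_in_orbit_of)
  ultimately show ?thesis by blast
qed

lemma card_orbit_of:
  assumes "pon h D" "x \<in> D"
  shows "card (orbit_of h x) = per h x"
proof -
  have "inj_on (\<lambda>n. (h ^^ n) x) {..<per h x}"
  proof (rule ccontr)
    assume "\<not> ?thesis"
    then obtain i j where ij: "i < per h x" "j < per h x" "i \<noteq> j" "(h ^^ i) x = (h ^^ j) x"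
      unfolding inj_on_def by auto
    have key: "\<And>i j. i < j \<Longrightarrow> j < per h x \<Longrightarrow> (h ^^ i) x = (h ^^ j) x \<Longrightarrow> False"
    proof -
      fix i j :: nat assume a: "i < j" "j < per h x" "(h ^^ i) x = (h ^^ j) x"
      have "(h ^^ i) ((h ^^ (j - i)) x) = (h ^^ j) x"
        using a proof -
        have "j = i + (j - i)" using a by simp
        then have "(h ^^ j) x = (h ^^ (i + (j - i))) x" by simp
        then show ?thesis by (simp only: funpow_add o_apply)
      qed
      then have "(h ^^ i) ((h ^^ (j - i)) x) = (h ^^ i) x" using a by simp
      moreover have "(h ^^ (j - i)) x \<in> D" by (rule pon_funpow_in[OF assms])
      ultimately have "(h ^^ (j - i)) x = x"
        using pon_inj_funpow[OF assms(1), of i] assms(2) unfolding inj_on_def by blast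
      moreover have "j - i < per h x" "0 < j - i" using a by auto
      ultimately show False using per_least[of "j - i" h x] by simp
    qed
    show False
    proof (cases "i < j")
      case True then show ?thesis using key ij by blast
    next
      case False then have "j < i" using ij by simp
      then show ?thesis using key ij by metis
    qed
  qed
  then show ?thesis using orbit_of_per[OF assms] by (simp add: card_image)
qed

lemma orbit_of_same:
  assumes "pon h D" "x \<in> D" "y \<in> orbit_of h x"
  shows "orbit_of h y = orbit_of h x"
proof -
  obtain k where k: "y = (h ^^ k) x" using assms(3) unfolding orbit_of_def by auto
  have "orbit_of h y \<subseteq> orbit_of h x"
  proof
    fix z assume "z \<in> orbit_of h y"
    then obtain n where "z = (h ^^ n) y" unfolding orbit_of_def by auto
    then have "z = (h ^^ (n + k)) x" using k by (simp add: funpow_add)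
    then show "z \<in> orbit_of h x" using funpow_in_orbit_of[of "n+k" h x] by simp
  qed
  moreover have "orbit_of h x \<subseteq> orbit_of h y"
  proof
    fix z assume "z \<in> orbit_of h x"
    then obtain n where n: "z = (h ^^ n) x" unfolding orbit_of_def by auto
    let ?p = "per h x"
    have kp: "k \<le> ?p * k" using per_props[OF assms(1,2)] by simp
    have "(h ^^ (n + ?p * k - k)) y = (h ^^ (n + ?p * k)) x"
    proof -
      have e: "n + ?p * k = (n + ?p * k - k) + k" using kp by arith
      have "(h ^^ (n + ?p * k)) x = (h ^^ ((n + ?p * k - k) + k)) x" using e by metis
      also have "\<dots> = (h ^^ (n + ?p * k - k)) ((h ^^ k) x)" by (simp only: funpow_add o_apply)
      finally show ?thesis using k by simp
    qed
    also have "\<dots> = (h ^^ n) ((h ^^ (?p * k)) x)" by (simp add: funpow_add)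
    also have "\<dots> = z" using n funpow_mult_fix[OF per_props(2)[OF assms(1,2)]] by simp
    finally show "z \<in> orbit_of h y" using funpow_in_orbit_of[of _ h y] by metis
  qed
  ultimately show ?thesis by blast
qed

lemma orbit_fix_dvd:
  assumes "pon h D" "A \<in> orbit_of h ` D" "y \<in> A" "card A dvd L"
  shows "(h ^^ L) y = y"
proof -
  obtain x where x: "x \<in> D" "A = orbit_of h x" using assms(2) by auto
  have yD: "y \<in> D" using pon_orbit_sub[OF assms(1) x(1)] x assms(3) by blast
  have "orbit_of h y = A" using orbit_of_same[OF assms(1) x(1)] x assms(3) by simp
  then have "card A = per h y" using card_orbit_of[OF assms(1) yD] by simp
  then show ?thesis using fix_iff_per_dvd[OF assms(1) yD] assms(4) by simp
qed

lemma orbits_Union: "pon h D \<Longrightarrow> \<Union> (orbit_of h ` D) = D"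
  using pon_orbit_sub self_in_orbit by fastforce

lemma orbits_disjoint:
  assumes "pon h D" "A \<in> orbit_of h ` D" "B \<in> orbit_of h ` D" "A \<noteq> B"
  shows "A \<inter> B = {}"
proof (rule ccontr)
  assume "A \<inter> B \<noteq> {}"
  then obtain z where z: "z \<in> A" "z \<in> B" by auto
  obtain x where x: "x \<in> D" "A = orbit_of h x" using assms(2) by auto
  obtain y where y: "y \<in> D" "B = orbit_of h y" using assms(3) by auto
  have "orbit_of h z = A" using orbit_of_same[OF assms(1) x(1)] x z by simp
  moreover have "orbit_of h z = B" using orbit_of_same[OF assms(1) y(1)] y z by simp
  ultimately show False using assms(4) by simp
qed

lemma orbits_card_sum:
  assumes "pon h D"
  shows "card D = (\<Sum>A\<in>orbit_of h ` D. card A)"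
proof -
  have fin: "finite D" using assms pon_def by auto
  have "card (\<Union> (orbit_of h ` D)) = sum card (orbit_of h ` D)"
  proof (rule card_Union_disjoint)
    show "pairwise disjnt (orbit_of h ` D)"
      unfolding pairwise_def disjnt_def using orbits_disjoint[OF assms] by blast
    show "\<And>A. A \<in> orbit_of h ` D \<Longrightarrow> finite A"
      using pon_orbit_sub[OF assms] fin finite_subset by blast
  qed
  then show ?thesis using orbits_Union[OF assms] by simp
qed

lemma orbit_card_pos:
  assumes "pon h D" "A \<in> orbit_of h ` D" shows "0 < card A"
proof -
  obtain x where x: "x \<in> D" "A = orbit_of h x" using assms(2) by auto
  show ?thesis using card_orbit_of[OF assms(1) x(1)] per_props[OF assms(1) x(1)] x by simp
qed

lemma orbit_finite:
  assumes "pon h D" "A \<in> orbit_of h ` D" shows "finite A"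
proof -
  obtain x where x: "x \<in> D" "A = orbit_of h x" using assms(2) by auto
  have "A \<subseteq> D" using pon_orbit_sub[OF assms(1) x(1)] x(2) by simp
  moreover have "finite D" using assms(1) pon_def by auto
  ultimately show ?thesis using finite_subset by auto
qed



lemma orbit_of_member:
  assumes "pon h D" "A \<in> orbit_of h ` D" "y \<in> A"
  shows "orbit_of h y = A"
proof -
  obtain x where x: "x \<in> D" "A = orbit_of h x" using assms(2) by auto
  show ?thesis using orbit_of_same[OF assms(1) x(1)] x assms(3) by simp
qed

lemma prod_perm_funpow:
  assumes "y \<in> PiE {..<l} S"
  shows "(prod_perm l h ^^ n) y = (\<lambda>i. if i < l then (h i ^^ n) (y i) else undefined)"
proof (induction n)
  case 0
  show ?case using assms by (auto simp: PiE_def extensional_def)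
next
  case (Suc n)
  have "(prod_perm l h ^^ Suc n) y = prod_perm l h ((prod_perm l h ^^ n) y)" by simp
  also have "\<dots> = prod_perm l h (\<lambda>i. if i < l then (h i ^^ n) (y i) else undefined)"
    using Suc by simp
  also have "\<dots> = (\<lambda>i. if i < l then (h i ^^ Suc n) (y i) else undefined)"
    by (auto simp: prod_perm_def fun_eq_iff)
  finally show ?case .
qed

lemma orbits_image_le:
  assumes fin: "finite \<Omega>" and inv: "g ` \<Omega> \<subseteq> \<Omega>" and surj: "F ` \<Omega> = \<Omega>'"
    and eq: "\<forall>x\<in>\<Omega>. F (g x) = g' (F x)"
  shows "card (orbit_of g' ` \<Omega>') \<le> card (orbit_of g ` \<Omega>)"
proof -
  have pw: "(g ^^ n) x \<in> \<Omega> \<and> F ((g ^^ n) x) = (g' ^^ n) (F x)" if "x \<in> \<Omega>" for x n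
  proof (induction n)
    case 0 then show ?case using that by simp
  next
    case (Suc n)
    then show ?case using inv eq by auto
  qed
  have oe: "orbit_of g' (F x) = F ` orbit_of g x" if "x \<in> \<Omega>" for x
  proof -
    have "{(g' ^^ n) (F x) | n. True} = {F ((g ^^ n) x) | n. True}"
      using pw[OF that] by metis
    also have "\<dots> = F ` {(g ^^ n) x | n. True}" by blast
    finally show ?thesis unfolding orbit_of_def .
  qed
  have "orbit_of g' ` \<Omega>' = (\<lambda>X. F ` X) ` (orbit_of g ` \<Omega>)"
    using surj oe by (auto simp: image_image)
  then show ?thesis using fin by (simp add: card_image_le)
qed

context
  fixes l :: nat and h :: "nat \<Rightarrow> 'b \<Rightarrow> 'b" and D :: "'b set"
  assumes H: "\<forall>i<l. pon (h i) D"
begin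

lemma box_stable:
  assumes A: "A \<in> PiE {..<l} (\<lambda>i. orbit_of (h i) ` D)" and y: "y \<in> PiE {..<l} A"
    and z: "z \<in> orbit_of (prod_perm l h) y"
  shows "z \<in> PiE {..<l} A"
proof -
  obtain n where n: "z = (prod_perm l h ^^ n) y" using z unfolding orbit_of_def by auto
  have zeq: "z = (\<lambda>i. if i < l then (h i ^^ n) (y i) else undefined)"
    using n prod_perm_funpow[OF y] by simp
  have "(h i ^^ n) (y i) \<in> A i" if "i < l" for i
  proof -
    have "orbit_of (h i) (y i) = A i"
      using orbit_of_member[of "h i" D "A i" "y i"] H A y that by auto
    then show ?thesis using funpow_in_orbit_of[of n "h i" "y i"] by simp
  qed
  then show ?thesis using zeq by (simp add: PiE_iff extensional_def)
qed

lemma box_sub: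
  assumes A: "A \<in> PiE {..<l} (\<lambda>i. orbit_of (h i) ` D)"
  shows "PiE {..<l} A \<subseteq> prod_set l D"
  unfolding prod_set_def
proof (rule PiE_mono)
  fix i assume "i \<in> {..<l}"
  then have "A i \<in> orbit_of (h i) ` D" "pon (h i) D" using A H by auto
  then obtain x where "x \<in> D" "A i = orbit_of (h i) x" "pon (h i) D" by auto
  then show "A i \<subseteq> D" using pon_orbit_sub by metis
qed

lemma box_finite:
  assumes A: "A \<in> PiE {..<l} (\<lambda>i. orbit_of (h i) ` D)"
  shows "finite (PiE {..<l} A)"
proof (rule finite_PiE)
  show "finite {..<l}" by simp
  fix i assume "i \<in> {..<l}"
  then have "A i \<in> orbit_of (h i) ` D" "pon (h i) D" using A H by auto
  then show "finite (A i)" using orbit_finite by metis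
qed

lemma box_bound:
  assumes A: "A \<in> PiE {..<l} (\<lambda>i. orbit_of (h i) ` D)" and L: "0 < L"
    and dv: "\<forall>i<l. card (A i) dvd L"
  shows "card (PiE {..<l} A) \<le> card (orbit_of (prod_perm l h) ` PiE {..<l} A) * L"
proof -
  let ?g = "prod_perm l h" and ?B = "PiE {..<l} A"
  have fixL: "(?g ^^ L) y = y" if y: "y \<in> ?B" for y
  proof -
    have "(h i ^^ L) (y i) = y i" if "i < l" for i
      using orbit_fix_dvd[of "h i" D "A i" "y i" L] H A y dv that by auto
    then show ?thesis using prod_perm_funpow[OF y] y by (auto simp: PiE_def extensional_def)
  qed
  have cardO: "card (orbit_of ?g y) \<le> L" if y: "y \<in> ?B" for y
  proof -
    have "orbit_of ?g y \<subseteq> (\<lambda>n. (?g ^^ n) y) ` {..<L}"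
    proof
      fix z assume "z \<in> orbit_of ?g y"
      then obtain n where n: "z = (?g ^^ n) y" unfolding orbit_of_def by auto
      have "(?g ^^ n) y = (?g ^^ (n mod L + L * (n div L))) y" by simp
      also have "\<dots> = (?g ^^ (n mod L)) ((?g ^^ (L * (n div L))) y)"
        by (simp only: funpow_add o_apply)
      also have "(?g ^^ (L * (n div L))) y = y" by (rule funpow_mult_fix[OF fixL[OF y]])
      finally have "z = (?g ^^ (n mod L)) y" using n by simp
      moreover have "n mod L < L" using L by simp
      ultimately show "z \<in> (\<lambda>n. (?g ^^ n) y) ` {..<L}" by auto
    qed
    then have "card (orbit_of ?g y) \<le> card ((\<lambda>n. (?g ^^ n) y) ` {..<L})"
      by (intro card_mono) auto
    also have "\<dots> \<le> L" using card_image_le[of "{..<L}"] by simp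
    finally show ?thesis .
  qed
  have "?B = \<Union> (orbit_of ?g ` ?B)"
  proof
    show "?B \<subseteq> \<Union> (orbit_of ?g ` ?B)"
    proof
      fix y assume "y \<in> ?B"
      then show "y \<in> \<Union> (orbit_of ?g ` ?B)" using self_in_orbit[of y ?g] by blast
    qed
    show "\<Union> (orbit_of ?g ` ?B) \<subseteq> ?B"
    proof
      fix z assume "z \<in> \<Union> (orbit_of ?g ` ?B)"
      then obtain y where "y \<in> ?B" "z \<in> orbit_of ?g y" by auto
      then show "z \<in> ?B" using box_stable[OF A] by blast
    qed
  qed
  then have "card ?B \<le> sum card (orbit_of ?g ` ?B)"
    using card_Union_le_sum_card by metis
  also have "\<dots> \<le> card (orbit_of ?g ` ?B) * L"
    using sum_bounded_above[of "orbit_of ?g ` ?B" card L] cardO by auto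
  finally show ?thesis .
qed

lemma box_sum:
  assumes I: "finite I" "inj_on \<beta> I" "\<beta> ` I \<subseteq> PiE {..<l} (\<lambda>i. orbit_of (h i) ` D)"
  shows "(\<Sum>j\<in>I. card (orbit_of (prod_perm l h) ` PiE {..<l} (\<beta> j)))
          \<le> ncycles (prod_perm l h) (prod_set l D)"
proof -
  let ?g = "prod_perm l h"
  let ?X = "\<lambda>j. orbit_of ?g ` PiE {..<l} (\<beta> j)"
  have "card (\<Union> (?X ` I)) = (\<Sum>j\<in>I. card (?X j))"
  proof (rule card_UN_disjoint)
    show "finite I" by fact
    show "\<forall>i\<in>I. finite (?X i)" using box_finite I(3) by blast
    show "\<forall>j\<in>I. \<forall>k\<in>I. j \<noteq> k \<longrightarrow> ?X j \<inter> ?X k = {}"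
    proof (intro ballI impI)
      fix j k assume jk: "j \<in> I" "k \<in> I" "j \<noteq> k"
      show "?X j \<inter> ?X k = {}"
      proof (rule ccontr)
        assume "?X j \<inter> ?X k \<noteq> {}"
        then obtain y z where yz: "y \<in> PiE {..<l} (\<beta> j)" "z \<in> PiE {..<l} (\<beta> k)"
          "orbit_of ?g y = orbit_of ?g z" by auto
        have bj: "\<beta> j \<in> PiE {..<l} (\<lambda>i. orbit_of (h i) ` D)" using I(3) jk by auto
        have bk: "\<beta> k \<in> PiE {..<l} (\<lambda>i. orbit_of (h i) ` D)" using I(3) jk by auto
        have "z \<in> orbit_of ?g y" using yz(3) self_in_orbit by metis
        then have zj: "z \<in> PiE {..<l} (\<beta> j)" using box_stable[OF bj yz(1)] by simp
        have "\<beta> j \<noteq> \<beta> k" using I(2) jk unfolding inj_on_def by blast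
        then obtain i where i: "i < l" "\<beta> j i \<noteq> \<beta> k i"
        proof -
          assume r: "\<And>i. i < l \<Longrightarrow> \<beta> j i \<noteq> \<beta> k i \<Longrightarrow> thesis"
          assume ne: "\<beta> j \<noteq> \<beta> k"
          show thesis
          proof (rule ccontr)
            assume "\<not> thesis"
            then have "\<forall>i<l. \<beta> j i = \<beta> k i" using r by blast
            moreover have "\<forall>i. \<not> i < l \<longrightarrow> \<beta> j i = \<beta> k i"
              using bj bk by (simp add: PiE_iff extensional_def)
            ultimately have "\<beta> j = \<beta> k" by (metis ext)
            then show False using ne by simp
          qed
        qed
        have "z i \<in> \<beta> j i" "z i \<in> \<beta> k i" using zj yz(2) i by auto
        moreover have "\<beta> j i \<inter> \<beta> k i = {}"
        proof -
          have "\<beta> j i \<in> orbit_of (h i) ` D" "\<beta> k i \<in> orbit_of (h i) ` D"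
            using bj bk i by auto
          moreover have "pon (h i) D" using H i by auto
          ultimately show ?thesis using orbits_disjoint i(2) by metis
        qed
        ultimately show False by blast
      qed
    qed
  qed
  moreover have "\<Union> (?X ` I) \<subseteq> orbit_of ?g ` prod_set l D"
    using box_sub I(3) by blast
  moreover have "finite (orbit_of ?g ` prod_set l D)"
    unfolding prod_set_def using H pon_def by (intro finite_imageI finite_PiE) auto
  ultimately show ?thesis unfolding ncycles_def by (metis card_mono)
qed

lemma box_nonempty_count:
  assumes A: "A \<in> PiE {..<l} (\<lambda>i. orbit_of (h i) ` D)"
  shows "1 \<le> card (orbit_of (prod_perm l h) ` PiE {..<l} A)"
proof -
  have "\<forall>i\<in>{..<l}. A i \<noteq> {}"
  proof
    fix i assume "i \<in> {..<l}"
    then have "A i \<in> orbit_of (h i) ` D" using A by auto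
    then obtain x where "A i = orbit_of (h i) x" by auto
    then show "A i \<noteq> {}" using self_in_orbit[of x "h i"] by auto
  qed
  then have "PiE {..<l} A \<noteq> {}" by (simp add: PiE_eq_empty_iff)
  moreover have "finite (PiE {..<l} A)" using box_finite[OF A] .
  ultimately show ?thesis by (simp add: Suc_le_eq card_gt_0_iff)
qed

end



lemma orbits_finite_set: "pon h D \<Longrightarrow> finite (orbit_of h ` D)"
  unfolding pon_def by simp

lemma n_pos: "pon h D \<Longrightarrow> D \<noteq> {} \<Longrightarrow> 1 \<le> card (orbit_of h ` D)"
  using orbits_finite_set by (simp add: Suc_le_eq card_gt_0_iff)

lemma single_orbit:
  assumes "pon h D" "card (orbit_of h ` D) = 1"
  shows "orbit_of h ` D = {D}"
proof -
  obtain A where A: "orbit_of h ` D = {A}" using assms(2) card_1_singletonE by blast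
  then have "A = D" using orbits_Union[OF assms(1)] by simp
  then show ?thesis using A by simp
qed

lemma prod_le_ncycles:
  assumes H: "\<forall>i<l. pon (h i) D"
  shows "(\<Prod>i<l. card (orbit_of (h i) ` D)) \<le> ncycles (prod_perm l h) (prod_set l D)"
proof -
  let ?I = "PiE {..<l} (\<lambda>i. orbit_of (h i) ` D)"
  have finI: "finite ?I" using H orbits_finite_set by (intro finite_PiE) auto
  have "(\<Prod>i<l. card (orbit_of (h i) ` D)) = card ?I" by (simp add: card_PiE)
  also have "\<dots> = (\<Sum>A\<in>?I. 1)" by simp
  also have "\<dots> \<le> (\<Sum>A\<in>?I. card (orbit_of (prod_perm l h) ` PiE {..<l} A))"
    using box_nonempty_count[OF H] by (intro sum_mono) auto
  also have "\<dots> \<le> ncycles (prod_perm l h) (prod_set l D)"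
    using box_sum[OF H finI, of id] by simp
  finally show ?thesis .
qed

lemma no_two_singles:
  assumes H: "\<forall>i<l. pon (h i) D" and r5: "5 \<le> card D"
    and nc: "ncycles (prod_perm l h) (prod_set l D) \<le> 4"
    and ij: "i < l" "j < l" "i \<noteq> j"
    and ni: "card (orbit_of (h i) ` D) = 1" and nj: "card (orbit_of (h j) ` D) = 1"
  shows False
proof -
  have "D \<noteq> {}" using r5 by auto
  then obtain x where x: "x \<in> D" by auto
  define A where "A = (\<lambda>k. if k < l then orbit_of (h k) x else undefined)"
  have A: "A \<in> PiE {..<l} (\<lambda>k. orbit_of (h k) ` D)" using x unfolding A_def by auto
  have Ai: "A i = D" using single_orbit[of "h i" D] H ni ij x unfolding A_def by auto
  have Aj: "A j = D" using single_orbit[of "h j" D] H nj ij x unfolding A_def by auto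
  have cpos: "0 < card (A k)" if "k < l" for k
    using orbit_card_pos[of "h k" D "A k"] H A that by auto
  define L where "L = (\<Prod>k\<in>{..<l} - {j}. card (A k))"
  have Lpos: "0 < L" unfolding L_def using cpos by (intro prod_pos) auto
  have dv: "\<forall>k<l. card (A k) dvd L"
  proof (intro allI impI)
    fix k assume k: "k < l"
    show "card (A k) dvd L"
    proof (cases "k = j")
      case True
      then have "card (A k) = card (A i)" using Ai Aj by simp
      moreover have "card (A i) dvd L" unfolding L_def using ij by (intro dvd_prodI) auto
      ultimately show ?thesis by simp
    next
      case False
      then show ?thesis unfolding L_def using k by (intro dvd_prodI) auto
    qed
  qed
  have "card (PiE {..<l} A) = (\<Prod>k<l. card (A k))" by (simp add: card_PiE)
  also have "\<dots> = card (A j) * L" unfolding L_def using ij by (subst prod.remove[of _ j]) auto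
  finally have cB: "card (PiE {..<l} A) = card D * L" using Aj by simp
  have "card D * L \<le> card (orbit_of (prod_perm l h) ` PiE {..<l} A) * L"
    using box_bound[OF H A Lpos dv] cB by simp
  then have "card D \<le> card (orbit_of (prod_perm l h) ` PiE {..<l} A)"
    using Lpos by simp
  also have "\<dots> \<le> ncycles (prod_perm l h) (prod_set l D)"
    using box_sum[OF H, of "{A}" id] A by simp
  finally show False using r5 nc by simp
qed

lemma reindex_le:
  assumes H: "\<forall>i<l. pon (h i) D" and pi: "\<pi> permutes {..<l}"
  shows "ncycles (prod_perm l (\<lambda>i. h (\<pi> i))) (prod_set l D) \<le> ncycles (prod_perm l h) (prod_set l D)"
  unfolding ncycles_def
proof (rule orbits_image_le)
  let ?\<Omega> = "prod_set l D"
  let ?F = "\<lambda>x. (\<lambda>i. if i < l then x (\<pi> i) else undefined)"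
  have pin: "\<pi> i < l" if "i < l" for i using permutes_in_image[OF pi] that by simp
  show "finite ?\<Omega>" unfolding prod_set_def using H pon_def by (intro finite_PiE) auto
  show "prod_perm l h ` ?\<Omega> \<subseteq> ?\<Omega>"
    unfolding prod_set_def prod_perm_def using H by (auto simp: pon_def PiE_iff extensional_def image_subset_iff)
  show "?F ` ?\<Omega> = ?\<Omega>"
  proof
    show "?F ` ?\<Omega> \<subseteq> ?\<Omega>"
    proof (rule image_subsetI)
      fix x assume "x \<in> ?\<Omega>"
      then have "\<forall>i<l. x i \<in> D" unfolding prod_set_def by auto
      then show "?F x \<in> ?\<Omega>" unfolding prod_set_def using pin by (simp add: PiE_iff extensional_def)
    qed
    show "?\<Omega> \<subseteq> ?F ` ?\<Omega>"
    proof
      fix y assume y: "y \<in> ?\<Omega>"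
      define x where "x = (\<lambda>i. if i < l then y (inv \<pi> i) else undefined)"
      have ipin: "inv \<pi> i < l" if "i < l" for i
        using permutes_in_image[OF permutes_inv[OF pi]] that by simp
      have "x \<in> ?\<Omega>" using y ipin unfolding x_def prod_set_def by (auto simp: PiE_iff extensional_def)
      moreover have "?F x = y"
      proof
        fix i show "?F x i = y i"
          using y pin permutes_inverses(2)[OF pi] unfolding x_def prod_set_def
          by (auto simp: PiE_iff extensional_def)
      qed
      ultimately show "y \<in> ?F ` ?\<Omega>" by force
    qed
  qed
  show "\<forall>x\<in>?\<Omega>. ?F (prod_perm l h x) = prod_perm l (\<lambda>i. h (\<pi> i)) (?F x)"
    using pin unfolding prod_perm_def by auto
qed



definition concl_body :: "nat \<Rightarrow> 'b set \<Rightarrow> (nat \<Rightarrow> 'b \<Rightarrow> 'b) \<Rightarrow> bool" where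
  "concl_body l \<Delta> h \<longleftrightarrow>
    (let r = card \<Delta>; c = (\<lambda>i. cycle_type (h i) \<Delta>) in
     (l = 2 \<and> (\<exists>t1 t2. c 0 = {#t1, r - t1#} \<and> c 1 = {#t2, r - t2#} \<and>
        coprime t1 t2 \<and> coprime t1 (r - t2) \<and> coprime (r - t1) t2 \<and> coprime (r - t1) (r - t2)))
   \<or> (l = 2 \<and> c 0 = {#r#} \<and> (\<exists>t2. c 1 = {#t2, r - t2#} \<and> gcd r t2 \<le> 2))
   \<or> (l = 2 \<and> c 0 = {#r#} \<and> (\<exists>t t'. c 1 = {#t, t', r - (t + t')#} \<and>
        gcd r t + gcd r t' + gcd r (t + t') \<le> 4))
   \<or> (l = 3 \<and> c 0 = {#r#} \<and> (\<exists>t2 t3. c 1 = {#t2, r - t2#} \<and> c 2 = {#t3, r - t3#} \<and>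
        coprime r t2 \<and> coprime r (r - t2) \<and> coprime r t3 \<and> coprime r (r - t3) \<and>
        coprime t2 (r - t2) \<and> coprime t2 t3 \<and> coprime t2 (r - t3) \<and>
        coprime (r - t2) t3 \<and> coprime (r - t2) (r - t3) \<and> coprime t3 (r - t3)))
   \<or> (l = 2 \<and> c 0 = {#r#} \<and> (\<exists>t t' t''. c 1 = {#t, t', t'', r - (t + t' + t'')#} \<and>
        gcd r t = 1 \<and> gcd r t' = 1 \<and> gcd r t'' = 1 \<and> gcd r (t + t' + t'') = 1)))"

lemma prop53_iff:
  "prop53_concl l \<Delta> h \<longleftrightarrow> (\<exists>\<pi>. \<pi> permutes {..<l} \<and> concl_body l \<Delta> (\<lambda>i. h (\<pi> i)))"
  unfolding prop53_concl_def concl_body_def by simp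

lemma less2: "i < (2::nat) \<longleftrightarrow> i = 0 \<or> i = 1" by auto
lemma less3: "i < (3::nat) \<longleftrightarrow> i = 0 \<or> i = 1 \<or> i = 2" by auto

lemma gcd_sub: "t \<le> r \<Longrightarrow> gcd r (r - t) = gcd r (t::nat)"
  by (metis gcd.commute gcd_diff2_nat)

lemma cop_sub: "coprime r t \<Longrightarrow> t \<le> r \<Longrightarrow> coprime t (r - (t::nat))"
  by (metis coprime_iff_gcd_eq_1 gcd.commute gcd_diff1_nat)

lemma gcd_le_cnt:
  fixes a b c :: nat
  assumes "0 < a" "0 < b" "a * b \<le> c * lcm a b"
  shows "gcd a b \<le> c"
proof -
  have "gcd a b * lcm a b \<le> c * lcm a b" using assms prod_gcd_lcm_nat by metis
  moreover have "0 < lcm a b" using assms lcm_pos_nat by blast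
  ultimately show ?thesis using mult_le_cancel2 by blast
qed

lemma cop3_aux:
  fixes x y z :: nat
  assumes "0 < x" "0 < y" "0 < z" "x * y * z \<le> lcm x (lcm y z)"
  shows "coprime x y"
proof -
  have "lcm x (lcm y z) dvd lcm x y * z"
    by (simp add: dvd_mult2 lcm_least)
  then have "lcm x (lcm y z) \<le> lcm x y * z" using assms by (simp add: dvd_imp_le lcm_pos_nat)
  then have "x * y * z \<le> lcm x y * z" using assms(4) by linarith
  then have "x * y \<le> lcm x y" using assms(3) by simp
  then have "gcd x y \<le> 1" using gcd_le_cnt[of x y 1] assms by simp
  moreover have "0 < gcd x y" using assms by simp
  ultimately have "gcd x y = 1" by linarith
  then show ?thesis by (simp add: coprime_iff_gcd_eq_1)
qed

lemma cop3:
  fixes x y z :: nat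
  assumes "0 < x" "0 < y" "0 < z" "x * y * z \<le> lcm x (lcm y z)"
  shows "coprime x y \<and> coprime x z \<and> coprime y z"
proof -
  have 1: "coprime x y" using cop3_aux assms by blast
  have "x * z * y \<le> lcm x (lcm z y)" using assms(4) by (simp add: ac_simps)
  then have 2: "coprime x z" using cop3_aux assms by blast
  have "y * z * x \<le> lcm y (lcm z x)" using assms(4) by (simp add: ac_simps)
  then have 3: "coprime y z" using cop3_aux assms by blast
  show ?thesis using 1 2 3 by simp
qed

lemma card4:
  assumes "card S = 4"
  shows "\<exists>a b c d. S = {a, b, c, d} \<and> a \<noteq> b \<and> a \<noteq> c \<and> a \<noteq> d \<and> b \<noteq> c \<and> b \<noteq> d \<and> c \<noteq> d"
proof -
  have "card S = Suc 3" using assms by simp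
  then obtain a B where aB: "S = insert a B" "a \<notin> B" "card B = 3"
    using card_Suc_eq[of S 3] by auto
  then obtain b c d where "B = {b, c, d}" "b \<noteq> c" "c \<noteq> d" "b \<noteq> d"
    using card_3_iff[THEN iffD1, OF aB(3)] by blast
  then show ?thesis using aB by blast
qed

definition box2 :: "'b set \<Rightarrow> 'b set \<Rightarrow> nat \<Rightarrow> 'b set" where
  "box2 a b = (\<lambda>i. if i = 0 then a else if i = 1 then b else undefined)"

definition box3 :: "'b set \<Rightarrow> 'b set \<Rightarrow> 'b set \<Rightarrow> nat \<Rightarrow> 'b set" where
  "box3 a b c = (\<lambda>i. if i = 0 then a else if i = 1 then b else if i = 2 then c else undefined)"

context
  fixes h :: "nat \<Rightarrow> 'b \<Rightarrow> 'b" and D :: "'b set"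
  assumes H: "\<forall>i<2. pon (h i) D"
begin

lemma box2_in:
  "a \<in> orbit_of (h 0) ` D \<Longrightarrow> b \<in> orbit_of (h 1) ` D \<Longrightarrow>
   box2 a b \<in> PiE {..<2} (\<lambda>i. orbit_of (h i) ` D)"
  unfolding box2_def by (auto simp: PiE_iff extensional_def less2)

lemma cnt2:
  assumes a: "a \<in> orbit_of (h 0) ` D" and b: "b \<in> orbit_of (h 1) ` D"
  shows "gcd (card a) (card b) \<le> card (orbit_of (prod_perm 2 h) ` PiE {..<2} (box2 a b))"
proof -
  have pa: "0 < card a" using orbit_card_pos[of "h 0" D a] H a by auto
  have pb: "0 < card b" using orbit_card_pos[of "h 1" D b] H b by auto
  have "card (PiE {..<2} (box2 a b)) = (\<Prod>i<2. card (box2 a b i))" by (simp add: card_PiE)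
  also have "\<dots> = card a * card b" by (simp add: box2_def numeral_2_eq_2)
  finally have cB: "card (PiE {..<2} (box2 a b)) = card a * card b" .
  have "card (PiE {..<2} (box2 a b))
        \<le> card (orbit_of (prod_perm 2 h) ` PiE {..<2} (box2 a b)) * lcm (card a) (card b)"
    by (rule box_bound[OF H box2_in[OF a b]]) (auto simp: lcm_pos_nat pa pb less2 box2_def)
  then show ?thesis using cB gcd_le_cnt pa pb by metis
qed

lemma sum2:
  "(\<Sum>a\<in>orbit_of (h 0) ` D. \<Sum>b\<in>orbit_of (h 1) ` D.
      card (orbit_of (prod_perm 2 h) ` PiE {..<2} (box2 a b)))
   \<le> ncycles (prod_perm 2 h) (prod_set 2 D)"
proof -
  let ?O0 = "orbit_of (h 0) ` D" and ?O1 = "orbit_of (h 1) ` D"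
  have "pon (h 0) D" "pon (h 1) D" using H by auto
  then have f: "finite (?O0 \<times> ?O1)" using orbits_finite_set by blast
  have inj: "inj_on (\<lambda>(a, b). box2 a b) (?O0 \<times> ?O1)"
  proof (rule inj_onI)
    fix p q assume "p \<in> ?O0 \<times> ?O1" "q \<in> ?O0 \<times> ?O1" "(\<lambda>(a, b). box2 a b) p = (\<lambda>(a, b). box2 a b) q"
    then have e: "box2 (fst p) (snd p) = box2 (fst q) (snd q)" by (simp add: case_prod_beta)
    have "fst p = fst q" using fun_cong[OF e, of 0] by (simp add: box2_def)
    moreover have "snd p = snd q" using fun_cong[OF e, of 1] by (simp add: box2_def)
    ultimately show "p = q" by (simp add: prod_eq_iff)
  qed
  have sub: "(\<lambda>(a, b). box2 a b) ` (?O0 \<times> ?O1) \<subseteq> PiE {..<2} (\<lambda>i. orbit_of (h i) ` D)"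
    using box2_in by auto
  have "(\<Sum>a\<in>?O0. \<Sum>b\<in>?O1. card (orbit_of (prod_perm 2 h) ` PiE {..<2} (box2 a b)))
     = (\<Sum>p\<in>?O0 \<times> ?O1. card (orbit_of (prod_perm 2 h) ` PiE {..<2} ((\<lambda>(a, b). box2 a b) p)))"
    by (simp add: sum.cartesian_product case_prod_beta)
  also have "\<dots> \<le> ncycles (prod_perm 2 h) (prod_set 2 D)"
    by (rule box_sum[OF H f inj sub])
  finally show ?thesis .
qed

end



lemma prod2: "(\<Prod>i<(2::nat). f i) = f 0 * (f 1 :: nat)"
  by (simp add: numeral_2_eq_2)

lemma prod3: "(\<Prod>i<(3::nat). f i) = f 0 * f 1 * (f 2 :: nat)"
  by (simp add: numeral_3_eq_3 numeral_2_eq_2 lessThan_Suc ac_simps)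

lemma ct1: "cycle_type h D = image_mset card (mset_set (orbit_of h ` D))"
  by (simp add: cycle_type_def)

lemma core2:
  fixes h :: "nat \<Rightarrow> 'b \<Rightarrow> 'b" and D :: "'b set"
  assumes H: "\<forall>i<2. pon (h i) D" and r5: "5 \<le> card D"
    and nc: "ncycles (prod_perm 2 h) (prod_set 2 D) \<le> 4"
    and le: "card (orbit_of (h 0) ` D) \<le> card (orbit_of (h 1) ` D)"
  shows "concl_body 2 D h"
proof -
  let ?O0 = "orbit_of (h 0) ` D" and ?O1 = "orbit_of (h 1) ` D"
  let ?r = "card D"
  let ?cnt = "\<lambda>a b. card (orbit_of (prod_perm 2 h) ` PiE {..<2} (box2 a b))"
  have H0: "pon (h 0) D" and H1: "pon (h 1) D" using H by auto
  have De: "D \<noteq> {}" using r5 by auto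
  have n0: "1 \<le> card ?O0" using n_pos[OF H0 De] .
  have n1: "1 \<le> card ?O1" using n_pos[OF H1 De] .
  have p: "card ?O0 * card ?O1 \<le> 4" using prod_le_ncycles[OF H] nc by (simp add: prod2)
  have ns: "\<not> (card ?O0 = 1 \<and> card ?O1 = 1)"
    using no_two_singles[OF H r5 nc, of 0 1] by auto
  have S: "(\<Sum>a\<in>?O0. \<Sum>b\<in>?O1. ?cnt a b) \<le> 4" using sum2[OF H] nc by simp
  have G: "gcd (card a) (card b) \<le> ?cnt a b" if "a \<in> ?O0" "b \<in> ?O1" for a b
    using cnt2[OF H that] .
  have pos0: "0 < card a" if "a \<in> ?O0" for a using orbit_card_pos[OF H0 that] .
  have pos1: "0 < card a" if "a \<in> ?O1" for a using orbit_card_pos[OF H1 that] .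
  have sum1: "?r = (\<Sum>A\<in>?O1. card A)" using orbits_card_sum[OF H1] .
  have sum0: "?r = (\<Sum>A\<in>?O0. card A)" using orbits_card_sum[OF H0] .
  have rpos: "0 < ?r" using r5 by simp
  have "card ?O0 = 1 \<or> card ?O0 = 2"
  proof (rule ccontr)
    assume "\<not> ?thesis"
    then have "3 \<le> card ?O0" using n0 by linarith
    moreover then have "3 \<le> card ?O1" using le by linarith
    ultimately have "3 * 3 \<le> card ?O0 * card ?O1" by (intro mult_le_mono)
    then show False using p by simp
  qed
  then show ?thesis
  proof
    assume c0: "card ?O0 = 1"
    have O0: "?O0 = {D}" using single_orbit[OF H0 c0] .
    have ct0: "cycle_type (h 0) D = {#?r#}" by (simp add: ct1 O0)
    have S1: "(\<Sum>b\<in>?O1. ?cnt D b) \<le> 4" using S O0 by simp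
    have GD: "gcd ?r (card b) \<le> ?cnt D b" if "b \<in> ?O1" for b using G[of D b] O0 that by simp
    have "card ?O1 = 2 \<or> card ?O1 = 3 \<or> card ?O1 = 4" using p c0 ns n1 by auto
    then show ?thesis
    proof (elim disjE)
      assume "card ?O1 = 2"
      then obtain a b where ab: "?O1 = {a, b}" "a \<noteq> b" by (auto simp: card_2_iff)
      have rr: "?r = card a + card b" using sum1 ab by simp
      have ct: "cycle_type (h 1) D = {#card a, ?r - card a#}" using ab rr by (simp add: ct1)
      have "?cnt D a + ?cnt D b \<le> 4" using S1 ab by simp
      moreover have "gcd ?r (card a) \<le> ?cnt D a" "gcd ?r (card b) \<le> ?cnt D b" using GD ab by auto
      moreover have "gcd ?r (card b) = gcd ?r (card a)"
        using gcd_sub[of "card a" ?r] rr by simp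
      ultimately have "gcd ?r (card a) \<le> 2" by linarith
      then have "cycle_type (h 0) D = {#?r#} \<and> (\<exists>t2. cycle_type (h 1) D = {#t2, ?r - t2#} \<and> gcd ?r t2 \<le> 2)"
        using ct0 ct by blast
      then show ?thesis by (simp only: concl_body_def Let_def) blast
    next
      assume "card ?O1 = 3"
      then obtain a b c where ab: "?O1 = {a, b, c}" "a \<noteq> b" "b \<noteq> c" "a \<noteq> c" by (auto simp: card_3_iff)
      have rr: "?r = card a + card b + card c" using sum1 ab by simp
      have ct: "cycle_type (h 1) D = {#card a, card b, ?r - (card a + card b)#}" using ab rr by (simp add: ct1)
      have "?cnt D a + ?cnt D b + ?cnt D c \<le> 4" using S1 ab by simp
      moreover have "gcd ?r (card a) \<le> ?cnt D a" "gcd ?r (card b) \<le> ?cnt D b" "gcd ?r (card c) \<le> ?cnt D c"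
        using GD ab by auto
      moreover have "gcd ?r (card a + card b) = gcd ?r (card c)"
        using gcd_sub[of "card c" ?r] rr by simp
      ultimately have "gcd ?r (card a) + gcd ?r (card b) + gcd ?r (card a + card b) \<le> 4" by linarith
      then have "cycle_type (h 0) D = {#?r#} \<and> (\<exists>t t'. cycle_type (h 1) D = {#t, t', ?r - (t + t')#} \<and>
          gcd ?r t + gcd ?r t' + gcd ?r (t + t') \<le> 4)"
        using ct0 ct by blast
      then show ?thesis by (simp only: concl_body_def Let_def) blast
    next
      assume "card ?O1 = 4"
      from card4[OF this] obtain a b c d where ab: "?O1 = {a, b, c, d}" "a \<noteq> b" "a \<noteq> c" "a \<noteq> d" "b \<noteq> c" "b \<noteq> d" "c \<noteq> d"
        by (elim exE conjE)
      have rr: "?r = card a + card b + card c + card d" using sum1 ab by simp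
      have ct: "cycle_type (h 1) D = {#card a, card b, card c, ?r - (card a + card b + card c)#}"
        using ab rr by (simp add: ct1)
      have "?cnt D a + ?cnt D b + ?cnt D c + ?cnt D d \<le> 4" using S1 ab by simp
      moreover have "gcd ?r (card a) \<le> ?cnt D a" "gcd ?r (card b) \<le> ?cnt D b" "gcd ?r (card c) \<le> ?cnt D c"
        "gcd ?r (card d) \<le> ?cnt D d"
        using GD ab by auto
      moreover have "0 < gcd ?r (card a)" "0 < gcd ?r (card b)" "0 < gcd ?r (card c)" "0 < gcd ?r (card d)"
        using rpos by auto
      moreover have "gcd ?r (card a + card b + card c) = gcd ?r (card d)"
        using gcd_sub[of "card d" ?r] rr by simp
      ultimately have "gcd ?r (card a) = 1 \<and> gcd ?r (card b) = 1 \<and> gcd ?r (card c) = 1 \<and>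
          gcd ?r (card a + card b + card c) = 1" by linarith
      then have "\<exists>t t' t''. cycle_type (h 1) D = {#t, t', t'', ?r - (t + t' + t'')#} \<and>
        gcd ?r t = 1 \<and> gcd ?r t' = 1 \<and> gcd ?r t'' = 1 \<and> gcd ?r (t + t' + t'') = 1"
        using ct by (intro exI[of _ "card a"] exI[of _ "card b"] exI[of _ "card c"]) simp
      then have "cycle_type (h 0) D = {#?r#} \<and> (\<exists>t t' t''. cycle_type (h 1) D = {#t, t', t'', ?r - (t + t' + t'')#} \<and>
        gcd ?r t = 1 \<and> gcd ?r t' = 1 \<and> gcd ?r t'' = 1 \<and> gcd ?r (t + t' + t'') = 1)"
        using ct0 by blast
      then show ?thesis by (simp only: concl_body_def Let_def) blast
    qed
  next
    assume c0: "card ?O0 = 2"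
    then have c1: "card ?O1 = 2" using p le by (cases "card ?O1 \<le> 2") auto
    obtain a b where ab: "?O0 = {a, b}" "a \<noteq> b" using c0 by (auto simp: card_2_iff)
    obtain c d where cd: "?O1 = {c, d}" "c \<noteq> d" using c1 by (auto simp: card_2_iff)
    have rr0: "?r = card a + card b" using sum0 ab by simp
    have rr1: "?r = card c + card d" using sum1 cd by simp
    have ct0: "cycle_type (h 0) D = {#card a, ?r - card a#}" using ab rr0 by (simp add: ct1)
    have ct: "cycle_type (h 1) D = {#card c, ?r - card c#}" using cd rr1 by (simp add: ct1)
    have "?cnt a c + ?cnt a d + (?cnt b c + ?cnt b d) \<le> 4" using S ab cd by simp
    moreover have "gcd (card a) (card c) \<le> ?cnt a c" "gcd (card a) (card d) \<le> ?cnt a d"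
       "gcd (card b) (card c) \<le> ?cnt b c" "gcd (card b) (card d) \<le> ?cnt b d"
      using G ab cd by auto
    moreover have "0 < card a" "0 < card b" using pos0 ab by auto
    then have "0 < gcd (card a) (card c)" "0 < gcd (card a) (card d)"
       "0 < gcd (card b) (card c)" "0 < gcd (card b) (card d)" by auto
    ultimately have "gcd (card a) (card c) = 1" "gcd (card a) (card d) = 1"
       "gcd (card b) (card c) = 1" "gcd (card b) (card d) = 1" by linarith+
    note gg = this
    then have "coprime (card a) (card c) \<and> coprime (card a) (?r - card c) \<and>
       coprime (?r - card a) (card c) \<and> coprime (?r - card a) (?r - card c)"
    proof -
      have e1: "?r - card a = card b" using rr0 by simp
      have e2: "?r - card c = card d" using rr1 by simp
      show ?thesis unfolding e1 e2 using gg by (simp add: coprime_iff_gcd_eq_1)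
    qed
    then have "\<exists>t1 t2. cycle_type (h 0) D = {#t1, ?r - t1#} \<and> cycle_type (h 1) D = {#t2, ?r - t2#} \<and>
        coprime t1 t2 \<and> coprime t1 (?r - t2) \<and> coprime (?r - t1) t2 \<and> coprime (?r - t1) (?r - t2)"
      using ct0 ct by blast
    then show ?thesis by (simp only: concl_body_def Let_def) blast
  qed
qed



context
  fixes h :: "nat \<Rightarrow> 'b \<Rightarrow> 'b" and D :: "'b set"
  assumes H: "\<forall>i<3. pon (h i) D"
begin

lemma box3_in:
  "a \<in> orbit_of (h 0) ` D \<Longrightarrow> b \<in> orbit_of (h 1) ` D \<Longrightarrow> c \<in> orbit_of (h 2) ` D \<Longrightarrow>
   box3 a b c \<in> PiE {..<3} (\<lambda>i. orbit_of (h i) ` D)"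
  unfolding box3_def by (auto simp: PiE_iff extensional_def less3)

lemma cnt3:
  assumes a: "a \<in> orbit_of (h 0) ` D" and b: "b \<in> orbit_of (h 1) ` D" and c: "c \<in> orbit_of (h 2) ` D"
  shows "card a * card b * card c \<le>
     card (orbit_of (prod_perm 3 h) ` PiE {..<3} (box3 a b c)) * lcm (card a) (lcm (card b) (card c))"
proof -
  have pa: "0 < card a" using orbit_card_pos[of "h 0" D a] H a by auto
  have pb: "0 < card b" using orbit_card_pos[of "h 1" D b] H b by auto
  have pc: "0 < card c" using orbit_card_pos[of "h 2" D c] H c by auto
  have "card (PiE {..<3} (box3 a b c)) = (\<Prod>i<3. card (box3 a b c i))" by (simp add: card_PiE)
  also have "\<dots> = card a * card b * card c" by (simp add: box3_def prod3)
  finally have cB: "card (PiE {..<3} (box3 a b c)) = card a * card b * card c" .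
  have "card (PiE {..<3} (box3 a b c))
        \<le> card (orbit_of (prod_perm 3 h) ` PiE {..<3} (box3 a b c)) * lcm (card a) (lcm (card b) (card c))"
    by (rule box_bound[OF H box3_in[OF a b c]]) (auto simp: lcm_pos_nat pa pb pc less3 box3_def)
  then show ?thesis using cB by simp
qed

lemma sum3:
  "(\<Sum>a\<in>orbit_of (h 0) ` D. \<Sum>b\<in>orbit_of (h 1) ` D. \<Sum>c\<in>orbit_of (h 2) ` D.
      card (orbit_of (prod_perm 3 h) ` PiE {..<3} (box3 a b c)))
   \<le> ncycles (prod_perm 3 h) (prod_set 3 D)"
proof -
  let ?O0 = "orbit_of (h 0) ` D" and ?O1 = "orbit_of (h 1) ` D" and ?O2 = "orbit_of (h 2) ` D"
  let ?f = "\<lambda>a b c. card (orbit_of (prod_perm 3 h) ` PiE {..<3} (box3 a b c))"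
  let ?\<beta> = "\<lambda>p. box3 (fst p) (fst (snd p)) (snd (snd p))"
  have "pon (h 0) D" "pon (h 1) D" "pon (h 2) D" using H by auto
  then have f: "finite (?O0 \<times> (?O1 \<times> ?O2))" using orbits_finite_set by blast
  have inj: "inj_on ?\<beta> (?O0 \<times> (?O1 \<times> ?O2))"
  proof (rule inj_onI)
    fix p q assume "p \<in> ?O0 \<times> (?O1 \<times> ?O2)" "q \<in> ?O0 \<times> (?O1 \<times> ?O2)" and e: "?\<beta> p = ?\<beta> q"
    have "fst p = fst q" using fun_cong[OF e, of 0] by (simp add: box3_def)
    moreover have "fst (snd p) = fst (snd q)" using fun_cong[OF e, of 1] by (simp add: box3_def)
    moreover have "snd (snd p) = snd (snd q)" using fun_cong[OF e, of 2] by (simp add: box3_def)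
    ultimately show "p = q" by (simp add: prod_eq_iff)
  qed
  have sub: "?\<beta> ` (?O0 \<times> (?O1 \<times> ?O2)) \<subseteq> PiE {..<3} (\<lambda>i. orbit_of (h i) ` D)"
  proof (rule image_subsetI)
    fix p assume "p \<in> ?O0 \<times> (?O1 \<times> ?O2)"
    then show "?\<beta> p \<in> PiE {..<3} (\<lambda>i. orbit_of (h i) ` D)"
      by (intro box3_in) (simp_all add: mem_Times_iff)
  qed
  have E: "(\<Sum>a\<in>?O0. \<Sum>b\<in>?O1. \<Sum>c\<in>?O2. ?f a b c)
      = (\<Sum>p\<in>?O0 \<times> (?O1 \<times> ?O2). card (orbit_of (prod_perm 3 h) ` PiE {..<3} (?\<beta> p)))"
    by (simp add: sum.cartesian_product case_prod_beta)
  show ?thesis unfolding E by (rule box_sum[OF H f inj sub])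
qed

end

lemma core3:
  fixes h :: "nat \<Rightarrow> 'b \<Rightarrow> 'b" and D :: "'b set"
  assumes H: "\<forall>i<3. pon (h i) D" and r5: "5 \<le> card D"
    and nc: "ncycles (prod_perm 3 h) (prod_set 3 D) \<le> 4"
    and c0: "card (orbit_of (h 0) ` D) = 1" and c1: "card (orbit_of (h 1) ` D) = 2"
    and c2: "card (orbit_of (h 2) ` D) = 2"
  shows "concl_body 3 D h"
proof -
  let ?r = "card D"
  let ?cnt = "\<lambda>a b c. card (orbit_of (prod_perm 3 h) ` PiE {..<3} (box3 a b c))"
  have H0: "pon (h 0) D" and H1: "pon (h 1) D" and H2: "pon (h 2) D" using H by auto
  have O0: "orbit_of (h 0) ` D = {D}" using single_orbit[OF H0 c0] .
  obtain a b where ab: "orbit_of (h 1) ` D = {a, b}" "a \<noteq> b" using c1 by (auto simp: card_2_iff)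
  obtain c d where cd: "orbit_of (h 2) ` D = {c, d}" "c \<noteq> d" using c2 by (auto simp: card_2_iff)
  have rr1: "?r = card a + card b" using orbits_card_sum[OF H1] ab by simp
  have rr2: "?r = card c + card d" using orbits_card_sum[OF H2] cd by simp
  have ct0: "cycle_type (h 0) D = {#?r#}" by (simp add: ct1 O0)
  have ct1': "cycle_type (h 1) D = {#card a, ?r - card a#}" using ab rr1 by (simp add: ct1)
  have ct2': "cycle_type (h 2) D = {#card c, ?r - card c#}" using cd rr2 by (simp add: ct1)
  have S: "?cnt D a c + ?cnt D a d + (?cnt D b c + ?cnt D b d) \<le> 4"
    using sum3[OF H] nc O0 ab cd by simp
  have ge1: "1 \<le> ?cnt x y z" if "x \<in> orbit_of (h 0) ` D" "y \<in> orbit_of (h 1) ` D" "z \<in> orbit_of (h 2) ` D" for x y z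
    using box_nonempty_count[OF H box3_in[OF H that]] .
  have "1 \<le> ?cnt D a c" "1 \<le> ?cnt D a d" "1 \<le> ?cnt D b c" "1 \<le> ?cnt D b d"
    using ge1 O0 ab cd by auto
  then have le1: "?cnt D a c \<le> 1" "?cnt D a d \<le> 1" "?cnt D b c \<le> 1" "?cnt D b d \<le> 1"
    using S by linarith+
  have pos: "0 < ?r" "0 < card a" "0 < card b" "0 < card c" "0 < card d"
    using r5 orbit_card_pos[OF H1] orbit_card_pos[OF H2] ab cd by auto
  have C: "coprime ?r (card y) \<and> coprime ?r (card z) \<and> coprime (card y) (card z)"
    if y: "y \<in> {a, b}" and z: "z \<in> {c, d}" and l1: "?cnt D y z \<le> 1" for y z
  proof -
    have "?r * card y * card z \<le> ?cnt D y z * lcm ?r (lcm (card y) (card z))"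
      using cnt3[OF H, of D y z] O0 ab cd y z by auto
    also have "\<dots> \<le> lcm ?r (lcm (card y) (card z))" using l1 by simp
    finally show ?thesis using cop3 pos y z by auto
  qed
  have Cac: "coprime ?r (card a) \<and> coprime ?r (card c) \<and> coprime (card a) (card c)" using C le1 by auto
  have Cad: "coprime ?r (card a) \<and> coprime ?r (card d) \<and> coprime (card a) (card d)" using C le1 by auto
  have Cbc: "coprime ?r (card b) \<and> coprime ?r (card c) \<and> coprime (card b) (card c)" using C le1 by auto
  have Cbd: "coprime ?r (card b) \<and> coprime ?r (card d) \<and> coprime (card b) (card d)" using C le1 by auto
  have e1: "?r - card a = card b" using rr1 by simp
  have e2: "?r - card c = card d" using rr2 by simp
  have cab: "coprime (card a) (card b)" using cop_sub[of ?r "card a"] Cac rr1 e1 by simp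
  have ccd: "coprime (card c) (card d)" using cop_sub[of ?r "card c"] Cac rr2 e2 by simp
  have "\<exists>t2 t3. cycle_type (h 1) D = {#t2, ?r - t2#} \<and> cycle_type (h 2) D = {#t3, ?r - t3#} \<and>
        coprime ?r t2 \<and> coprime ?r (?r - t2) \<and> coprime ?r t3 \<and> coprime ?r (?r - t3) \<and>
        coprime t2 (?r - t2) \<and> coprime t2 t3 \<and> coprime t2 (?r - t3) \<and>
        coprime (?r - t2) t3 \<and> coprime (?r - t2) (?r - t3) \<and> coprime t3 (?r - t3)"
    by (rule exI[of _ "card a"], rule exI[of _ "card c"])
       (simp only: ct1' ct2' e1 e2 Cac Cad Cbc Cbd cab ccd simp_thms)
  then show ?thesis using ct0 by (simp only: concl_body_def Let_def) blast
qed



lemma m8: "2 \<le> x \<Longrightarrow> 2 \<le> y \<Longrightarrow> 2 \<le> z \<Longrightarrow> 1 \<le> w \<Longrightarrow> 8 \<le> x * y * z * (w::nat)"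
proof -
  assume "2 \<le> x" "2 \<le> y" "2 \<le> z" "1 \<le> w"
  then have "2 * 2 * 2 * 1 \<le> x * y * z * w" by (intro mult_le_mono)
  then show ?thesis by simp
qed

lemma four:
  fixes a b c d :: nat
  assumes "1 \<le> a" "1 \<le> b" "1 \<le> c" "1 \<le> d"
    "\<not> (a = 1 \<and> b = 1)" "\<not> (a = 1 \<and> c = 1)" "\<not> (a = 1 \<and> d = 1)"
    "\<not> (b = 1 \<and> c = 1)" "\<not> (b = 1 \<and> d = 1)" "\<not> (c = 1 \<and> d = 1)"
  shows "8 \<le> a * b * c * d"
proof (cases "a = 1")
  case True
  then have "2 \<le> b" "2 \<le> c" "2 \<le> d" using assms by auto
  then have "8 \<le> b * c * d * a" using m8 assms by blast
  then show ?thesis by (simp add: ac_simps)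
next
  case a: False
  then have a2: "2 \<le> a" using assms by auto
  show ?thesis
  proof (cases "b = 1")
    case True
    then have "2 \<le> c" "2 \<le> d" using assms by auto
    then have "8 \<le> a * c * d * b" using m8 assms a2 by blast
    then show ?thesis by (simp add: ac_simps)
  next
    case False
    then have b2: "2 \<le> b" using assms by auto
    show ?thesis
    proof (cases "c = 1")
      case True
      then have "2 \<le> d" using assms by auto
      then have "8 \<le> a * b * d * c" using m8 assms a2 b2 by blast
      then show ?thesis by (simp add: ac_simps)
    next
      case False
      then have "2 \<le> c" using assms by auto
      then show ?thesis using m8 assms a2 b2 by blast
    qed
  qed
qed

lemma two2:
  fixes x y :: nat
  assumes "2 \<le> x" "2 \<le> y" "x * y \<le> 4"
  shows "x = 2 \<and> y = 2"
proof -
  have "2 * y \<le> x * y" using assms by (intro mult_le_mono1)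
  moreover have "x * 2 \<le> x * y" using assms by (intro mult_le_mono2)
  ultimately show ?thesis using assms by linarith
qed

lemma prod4: "(\<Prod>i<(4::nat). f i) = f 0 * f 1 * f 2 * (f 3 :: nat)"
  by (simp add: numeral_eq_Suc lessThan_Suc ac_simps)

lemma abstract:
  fixes h :: "nat \<Rightarrow> 'b \<Rightarrow> 'b" and D :: "'b set"
  assumes H: "\<forall>i<l. pon (h i) D" and r5: "5 \<le> card D" and l2: "2 \<le> l"
    and nc: "ncycles (prod_perm l h) (prod_set l D) \<le> 4"
  shows "prop53_concl l D h"
proof -
  let ?n = "\<lambda>i. card (orbit_of (h i) ` D)"
  have De: "D \<noteq> {}" using r5 by auto
  have npos: "1 \<le> ?n i" if "i < l" for i using n_pos[of "h i" D] H that De by auto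
  have P: "(\<Prod>i<l. ?n i) \<le> 4" using prod_le_ncycles[OF H] nc by linarith
  have NS: "\<not> (?n i = 1 \<and> ?n j = 1)" if "i < l" "j < l" "i \<noteq> j" for i j
    using no_two_singles[OF H r5 nc that] by blast
  have l3: "l \<le> 3"
  proof (rule ccontr)
    assume "\<not> l \<le> 3"
    then have l4: "4 \<le> l" by simp
    have eq: "{..<l} = {..<4} \<union> {4..<l}" using l4 by auto
    have "(\<Prod>i<l. ?n i) = (\<Prod>i\<in>{..<4} \<union> {4..<l}. ?n i)" by (simp only: eq)
    also have "\<dots> = (\<Prod>i<4. ?n i) * (\<Prod>i\<in>{4..<l}. ?n i)"
      by (rule prod.union_disjoint) auto
    finally have "(\<Prod>i<l. ?n i) = (\<Prod>i<4. ?n i) * (\<Prod>i\<in>{4..<l}. ?n i)" .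
    moreover have "1 \<le> (\<Prod>i\<in>{4..<l}. ?n i)" using npos by (intro prod_ge_1) auto
    ultimately have "(\<Prod>i<4. ?n i) \<le> (\<Prod>i<l. ?n i)"
      by (metis mult.right_neutral mult_le_mono2)
    then have "?n 0 * ?n 1 * ?n 2 * ?n 3 \<le> 4" using P by (simp add: prod4)
    moreover have "8 \<le> ?n 0 * ?n 1 * ?n 2 * ?n 3"
      by (rule four) (use npos[of 0] npos[of 1] npos[of 2] npos[of 3] NS[of 0 1] NS[of 0 2] NS[of 0 3]
          NS[of 1 2] NS[of 1 3] NS[of 2 3] l4 in auto)
    ultimately show False by simp
  qed
  have "l = 2 \<or> l = 3" using l2 l3 by auto
  then show ?thesis
  proof
    assume l: "l = 2"
    define \<pi> :: "nat \<Rightarrow> nat" where "\<pi> = (if ?n 0 \<le> ?n 1 then id else transpose 0 1)"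
    have pi: "\<pi> permutes {..<l}" unfolding \<pi>_def l by (auto intro: permutes_id permutes_swap_id)
    let ?h = "\<lambda>i. h (\<pi> i)"
    have pin: "\<pi> i < l" if "i < l" for i using permutes_in_image[OF pi] that by simp
    have H': "\<forall>i<2. pon (?h i) D" using H pin l by auto
    have nc': "ncycles (prod_perm 2 ?h) (prod_set 2 D) \<le> 4" using reindex_le[OF H pi] nc l by simp
    have le': "card (orbit_of (?h 0) ` D) \<le> card (orbit_of (?h 1) ` D)"
      unfolding \<pi>_def by auto
    have "concl_body 2 D ?h" by (rule core2[OF H' r5 nc' le'])
    then show ?thesis unfolding prop53_iff l using pi l by blast
  next
    assume l: "l = 3"
    have P3: "?n 0 * ?n 1 * ?n 2 \<le> 4" using P l by (simp add: prod3)
    obtain s where s: "s < 3" "?n s = 1"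
    proof (rule ccontr)
      assume "\<not> thesis"
      then have "\<forall>s<3. ?n s \<noteq> 1" using that by blast
      then have "?n 0 \<noteq> 1" "?n 1 \<noteq> 1" "?n 2 \<noteq> 1" by auto
      moreover have "1 \<le> ?n 0" "1 \<le> ?n 1" "1 \<le> ?n 2" using npos l by auto
      ultimately have "2 \<le> ?n 0" "2 \<le> ?n 1" "2 \<le> ?n 2" by linarith+
      then have "8 \<le> ?n 0 * ?n 1 * ?n 2 * 1" using m8 by blast
      then show False using P3 by simp
    qed
    define \<pi> :: "nat \<Rightarrow> nat" where "\<pi> = transpose 0 s"
    have pi: "\<pi> permutes {..<l}" unfolding \<pi>_def l using s by (auto intro: permutes_swap_id)
    let ?h = "\<lambda>i. h (\<pi> i)"
    have pin: "\<pi> i < l" if "i < l" for i using permutes_in_image[OF pi] that by simp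
    have H': "\<forall>i<3. pon (?h i) D" using H pin l by auto
    have nc': "ncycles (prod_perm 3 ?h) (prod_set 3 D) \<le> 4" using reindex_le[OF H pi] nc l by simp
    let ?m = "\<lambda>i. card (orbit_of (?h i) ` D)"
    have m0: "?m 0 = 1" using s unfolding \<pi>_def by simp
    have mpos: "1 \<le> ?m i" if "i < 3" for i using n_pos[of "?h i" D] H' that De by auto
    have m1: "?m 1 \<noteq> 1" using no_two_singles[OF H' r5 nc', of 0 1] m0 by auto
    have m2: "?m 2 \<noteq> 1" using no_two_singles[OF H' r5 nc', of 0 2] m0 by auto
    have Pm: "?m 0 * ?m 1 * ?m 2 \<le> 4" using prod_le_ncycles[OF H'] nc' by (simp add: prod3)
    have "2 \<le> ?m 1" "2 \<le> ?m 2" using mpos[of 1] mpos[of 2] m1 m2 by auto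
    moreover have "?m 1 * ?m 2 \<le> 4" using Pm m0 by simp
    ultimately have "?m 1 = 2" "?m 2 = 2"
      using two2 by blast+
    have "concl_body 3 D ?h" by (rule core3[OF H' r5 nc' m0]) fact+
    then show ?thesis unfolding prop53_iff l using pi l by blast
  qed
qed



lemma sym_pon:
  assumes "h \<in> SymH m"
  shows "pon h (ksubsets m k)"
proof -
  obtain \<sigma> where s: "\<sigma> permutes {1..m}" "h = (\<lambda>S. \<sigma> ` S)" using assms unfolding SymH_def by auto
  have inj: "inj \<sigma>" using permutes_inj[OF s(1)] .
  have im: "\<sigma> ` {1..m} = {1..m}" using permutes_image[OF s(1)] .
  have fin: "finite (ksubsets m k)"
    unfolding ksubsets_def by (rule finite_subset[of _ "Pow {1..m}"]) auto
  have "h ` ksubsets m k \<subseteq> ksubsets m k"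
  proof
    fix T assume "T \<in> h ` ksubsets m k"
    then obtain S where S: "S \<subseteq> {1..m}" "card S = k" "T = \<sigma> ` S" using s(2) unfolding ksubsets_def by auto
    have "T \<subseteq> {1..m}" using S im by auto
    moreover have "card T = k" using S inj card_image[of \<sigma> S] inj_on_subset[of \<sigma> UNIV S] by simp
    ultimately show "T \<in> ksubsets m k" unfolding ksubsets_def by simp
  qed
  moreover have "inj_on h (ksubsets m k)"
    using inj s(2) by (auto intro!: inj_onI simp: inj_image_eq_iff)
  ultimately show ?thesis using fin unfolding pon_def by simp
qed

lemma sym_card:
  assumes "5 \<le> m" "1 \<le> k" "2 * k < m"
  shows "5 \<le> card (ksubsets m k)"
proof -
  have "card (ksubsets m k) = m choose k"
    unfolding ksubsets_def using n_subsets[of "{1..m}" k] by simp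
  moreover have "m choose 1 \<le> m choose k" using assms by (intro binomial_mono) auto
  ultimately show ?thesis using assms by simp
qed

lemma pg_pon:
  assumes "h \<in> (PGammaL :: (('a::{field,finite} ^ 'n) set \<Rightarrow> ('a ^ 'n) set) set)"
  shows "pon h (pg_points :: ('a ^ 'n) set set)"
proof -
  obtain f :: "'a ^ 'n \<Rightarrow> 'a ^ 'n" where f: "semilinear_bij f" "h = (\<lambda>P. f ` P)"
    using assms unfolding PGammaL_def by auto
  obtain \<sigma> where bf: "bij f" and add: "\<forall>x y. f (x + y) = f x + f y"
    and sig: "field_aut \<sigma>" and sm: "\<forall>c x. f (c *s x) = \<sigma> c *s f x"
    using f(1) unfolding semilinear_bij_def by auto
  have bs: "bij \<sigma>" using sig unfolding field_aut_def by simp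
  have injf: "inj f" using bf bij_is_inj by auto
  have f0: "f 0 = 0"
  proof -
    have "f (0 + 0) = f 0 + f 0" using add by blast
    then show ?thesis by simp
  qed
  have img: "f ` {c *s v | c. True} = {c *s f v | c. True}" for v
  proof
    show "f ` {c *s v | c. True} \<subseteq> {c *s f v | c. True}" using sm by auto
    show "{c *s f v | c. True} \<subseteq> f ` {c *s v | c. True}"
    proof
      fix y assume "y \<in> {c *s f v | c. True}"
      then obtain c where c: "y = c *s f v" by auto
      have "\<sigma> (inv \<sigma> c) = c" using bs by (simp add: bij_is_surj surj_f_inv_f)
      then have "f (inv \<sigma> c *s v) = y" using sm c by simp
      then show "y \<in> f ` {c *s v | c. True}" by blast
    qed
  qed
  have "h ` pg_points \<subseteq> pg_points"
  proof
    fix Q assume "Q \<in> h ` pg_points"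
    then obtain v where v: "v \<noteq> 0" "Q = f ` {c *s v | c. True}" using f(2) unfolding pg_points_def by auto
    have "f v \<noteq> 0" using v(1) f0 injf by (metis injD)
    then show "Q \<in> pg_points" using v img unfolding pg_points_def by blast
  qed
  moreover have "inj_on h pg_points"
    using injf f(2) by (auto intro!: inj_onI simp: inj_image_eq_iff)
  ultimately show ?thesis unfolding pon_def by simp
qed

lemma line_eq:
  fixes u v :: "'a::field ^ 'n"
  assumes "{c *s u | c. True} = {c *s v | c. True}"
  shows "\<exists>c. u = c *s v"
proof -
  have "u \<in> {c *s u | c. True}" by (auto intro: exI[of _ 1])
  then show ?thesis using assms by auto
qed

lemma pg_card:
  assumes "2 \<le> CARD('n::finite)" "4 \<le> CARD('a::{field,finite})"
  shows "5 \<le> card (pg_points :: ('a ^ 'n) set set)"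
proof -
  obtain i0 :: 'n where True by simp
  have "UNIV - {i0} \<noteq> {}"
  proof
    assume "UNIV - {i0} = {}"
    then have "UNIV = {i0}" by auto
    then have "CARD('n) = card {i0}" by (simp only:)
    then have "CARD('n) = 1" by simp
    then show False using assms(1) by simp
  qed
  then obtain i1 where i1: "i1 \<noteq> i0" by auto
  define L where "L = (\<lambda>v::'a ^ 'n. {c *s v | c. True})"
  define e where "e = (\<chi> j. if j = i1 then (1::'a) else 0)"
  define w where "w = (\<lambda>a::'a. \<chi> j. if j = i0 then 1 else if j = i1 then a else 0)"
  define \<phi> where "\<phi> = (\<lambda>x::'a option. case x of None \<Rightarrow> L e | Some a \<Rightarrow> L (w a))"
  have e0: "e \<noteq> 0"
  proof
    assume "e = 0"
    then have "e $ i1 = 0" by simp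
    then show False unfolding e_def by simp
  qed
  have w0: "w a \<noteq> 0" for a
  proof
    assume "w a = 0"
    then have "w a $ i0 = 0" by simp
    then show False unfolding w_def by simp
  qed
  have "range \<phi> \<subseteq> pg_points"
  proof (rule image_subsetI)
    fix x :: "'a option"
    show "\<phi> x \<in> pg_points"
    proof (cases x)
      case None
      then have "\<phi> x = L e" unfolding \<phi>_def by simp
      then show ?thesis unfolding pg_points_def L_def using e0 by blast
    next
      case (Some a)
      then have "\<phi> x = L (w a)" unfolding \<phi>_def by simp
      then show ?thesis unfolding pg_points_def L_def using w0[of a] by blast
    qed
  qed
  moreover have "inj \<phi>"
  proof (rule injI)
    fix x y assume xy: "\<phi> x = \<phi> y"
    show "x = y"
    proof (cases x; cases y)
      fix a b assume x: "x = Some a" and y: "y = Some b"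
      then have "L (w a) = L (w b)" using xy unfolding \<phi>_def by simp
      then have "\<exists>c. w a = c *s w b" using line_eq[of "w a" "w b"] unfolding L_def by blast
      then obtain c where c: "w a = c *s w b" by blast
      have "1 = c" using arg_cong[OF c, of "\<lambda>v. v $ i0"] unfolding w_def by simp
      moreover have "a = c * b" using arg_cong[OF c, of "\<lambda>v. v $ i1"] i1 unfolding w_def by simp
      ultimately show "x = y" using x y by simp
    next
      fix b assume x: "x = None" and y: "y = Some b"
      then have "L (e) = L (w b)" using xy unfolding \<phi>_def by simp
      then have "\<exists>c. e = c *s w b" using line_eq[of "e" "w b"] unfolding L_def by blast
      then obtain c where c: "e = c *s w b" by blast
      have "0 = c" using arg_cong[OF c, of "\<lambda>v. v $ i0"] i1 unfolding w_def e_def by simp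
      moreover have "1 = c * b" using arg_cong[OF c, of "\<lambda>v. v $ i1"] i1 unfolding w_def e_def by simp
      ultimately show "x = y" by simp
    next
      fix a assume x: "x = Some a" and y: "y = None"
      then have "L (w a) = L (e)" using xy unfolding \<phi>_def by simp
      then have "\<exists>c. w a = c *s e" using line_eq[of "w a" "e"] unfolding L_def by blast
      then obtain c where c: "w a = c *s e" by blast
      have "1 = c * 0" using arg_cong[OF c, of "\<lambda>v. v $ i0"] i1 unfolding w_def e_def by simp
      then show "x = y" by simp
    qed simp
  qed
  ultimately have "card (UNIV :: 'a option set) \<le> card (pg_points :: ('a ^ 'n) set set)"
    by (intro card_inj_on_le[of \<phi>]) auto
  then show ?thesis using assms(2) by simp
qed

theorem proposition5p3:
  shows "(\<forall>(m::nat) (k::nat) (l::nat) (h :: nat \<Rightarrow> nat set \<Rightarrow> nat set).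
            5 \<le> m \<and> 1 \<le> k \<and> 2 * k < m \<and> 2 \<le> l \<and> (\<forall>i<l. h i \<in> SymH m) \<and>
            ncycles (prod_perm l h) (prod_set l (ksubsets m k)) \<le> 4
            \<longrightarrow> prop53_concl l (ksubsets m k) h)
       \<and> (\<forall>(l::nat) (h :: nat \<Rightarrow> ('a::{field,finite} ^ 'n) set \<Rightarrow> ('a ^ 'n) set).
            2 \<le> CARD('n) \<and> 4 \<le> CARD('a) \<and> 2 \<le> l \<and> (\<forall>i<l. h i \<in> PGammaL) \<and>
            ncycles (prod_perm l h) (prod_set l pg_points) \<le> 4
            \<longrightarrow> prop53_concl l (pg_points :: ('a ^ 'n) set set) h)"
proof (intro conjI allI impI)
  fix m k l :: nat and h :: "nat \<Rightarrow> nat set \<Rightarrow> nat set"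
  assume a: "5 \<le> m \<and> 1 \<le> k \<and> 2 * k < m \<and> 2 \<le> l \<and> (\<forall>i<l. h i \<in> SymH m) \<and>
            ncycles (prod_perm l h) (prod_set l (ksubsets m k)) \<le> 4"
  show "prop53_concl l (ksubsets m k) h"
    using abstract[of l h "ksubsets m k"] a sym_pon sym_card by blast
next
  fix l :: nat and h :: "nat \<Rightarrow> ('a::{field,finite} ^ 'n) set \<Rightarrow> ('a ^ 'n) set"
  assume a: "2 \<le> CARD('n) \<and> 4 \<le> CARD('a) \<and> 2 \<le> l \<and> (\<forall>i<l. h i \<in> PGammaL) \<and>
            ncycles (prod_perm l h) (prod_set l pg_points) \<le> 4"
  show "prop53_concl l (pg_points :: ('a ^ 'n) set set) h"
    using abstract[of l h "pg_points :: ('a ^ 'n) set set"] a pg_pon pg_card by blast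
qed


end
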